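(* Let $1\le k\le d$ be integers. There exist $d+2$ mass assignments $\mu_0,\dots,\mu_{d+1}$ on the $k$-dimensional linear subspaces of $\mathbb{R}^d$ such that for no $k$-dimensional linear subspace $L$ of $\mathbb{R}^d$ is there a closed ball or closed half-space of $L$ containing exactly half of each of $\mu_0^L,\dots,\mu_{d+1}^L$.
   Context: A mass distribution on a $k$-dimensional space $L$ is a probability measure on $L$ absolutely continuous with respect to Lebesgue measure on $L$. A mass assignment on the $k$-dimensional linear subspaces of $\mathbb{R}^d$ is an assignment $L\mapsto \mu^L$ of a mass distribution $\mu^L$ on $L$ to every $k$-dimensional linear subspace $L$, depending continuously on $L$. *)

theory Defs
  imports "HOL-Probability.Probability"
begin

text \<open>Ambient space R^d is real^'n (d = CARD('n)); the dimension k is encoded by a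
finite type 'k (k = CARD('k)), so that R^k = real^'k.\<close>

definition k_subspace :: "'k::finite itself \<Rightarrow> (real^'n::finite) set \<Rightarrow> bool" where
  "k_subspace K L \<longleftrightarrow> subspace L \<and> dim L = CARD('k)"

text \<open>Lebesgue measure on a k-dimensional linear subspace L, viewed as a measure on the
ambient space: push-forward of Lebesgue measure on R^k under a linear isometry onto L
(independent of the choice by isometry invariance of Lebesgue measure).\<close>

definition lebesgue_on_subspace :: "'k::finite itself \<Rightarrow> (real^'n::finite) set \<Rightarrow> (real^'n) measure" where
  "lebesgue_on_subspace K L =
     distr (lborel :: (real^'k) measure) borel
       (SOME f :: real^'k \<Rightarrow> real^'n. linear f \<and> (\<forall>x. norm (f x) = norm x) \<and> range f = L)"

definition mass_distribution :: "'k::finite itself \<Rightarrow> (real^'n::finite) set \<Rightarrow> (real^'n) measure \<Rightarrow> bool" where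
  "mass_distribution K L M \<longleftrightarrow>
     sets M = sets borel \<and> prob_space M \<and> emeasure M (UNIV - L) = 0 \<and>
     absolutely_continuous (lebesgue_on_subspace K L) M"

text \<open>Convergence in the Grassmannian: orthogonal projections converge (pointwise,
equivalently in operator norm since the dimension is finite).\<close>

definition grass_tendsto :: "(nat \<Rightarrow> (real^'n::finite) set) \<Rightarrow> (real^'n) set \<Rightarrow> bool" where
  "grass_tendsto Ls L \<longleftrightarrow> (\<forall>x. (\<lambda>i. closest_point (Ls i) x) \<longlonglongrightarrow> closest_point L x)"

definition mass_assignment :: "'k::finite itself \<Rightarrow> ((real^'n::finite) set \<Rightarrow> (real^'n) measure) \<Rightarrow> bool" where
  "mass_assignment K \<mu> \<longleftrightarrow>
     (\<forall>L. k_subspace K L \<longrightarrow> mass_distribution K L (\<mu> L)) \<and>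
     (\<forall>Ls L. (\<forall>i. k_subspace K (Ls i)) \<and> k_subspace K L \<and> grass_tendsto Ls L \<longrightarrow>
        (\<forall>g :: real^'n \<Rightarrow> real. continuous_on UNIV g \<and> bounded (range g) \<longrightarrow>
           (\<lambda>i. integral\<^sup>L (\<mu> (Ls i)) g) \<longlonglongrightarrow> integral\<^sup>L (\<mu> L) g))"

definition closed_ball_of :: "(real^'n::finite) set \<Rightarrow> (real^'n) set \<Rightarrow> bool" where
  "closed_ball_of L H \<longleftrightarrow> (\<exists>c r. c \<in> L \<and> 0 < r \<and> H = cball c r \<inter> L)"

definition closed_halfspace_of :: "(real^'n::finite) set \<Rightarrow> (real^'n) set \<Rightarrow> bool" where
  "closed_halfspace_of L H \<longleftrightarrow> (\<exists>a b. a \<in> L \<and> a \<noteq> 0 \<and> H = {x \<in> L. a \<bullet> x \<le> b})"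

end

theory Submission
  imports Defs
begin


lemma nn_integral_translate:
  fixes t :: "'a::euclidean_space"
  assumes [measurable]: "f \<in> borel_measurable borel"
  shows "(\<integral>\<^sup>+x. f (t + x) \<partial>lborel) = (\<integral>\<^sup>+x. f x \<partial>lborel)"
proof -
  have "(\<integral>\<^sup>+x. f x \<partial>lborel) = (\<integral>\<^sup>+x. f x \<partial>(distr lborel borel ((+) t)))"
    by (simp add: lborel_distr_plus)
  also have "\<dots> = (\<integral>\<^sup>+x. f (t + x) \<partial>lborel)"
    by (subst nn_integral_distr) auto
  finally show ?thesis by simp
qed

lemma nn_integral_reflect:
  fixes t :: "'a::euclidean_space"
  assumes [measurable]: "f \<in> borel_measurable borel"
  shows "(\<integral>\<^sup>+x. f (t - x) \<partial>lborel) = (\<integral>\<^sup>+x. f x \<partial>lborel)"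
proof -
  have "(\<integral>\<^sup>+x. f x \<partial>lborel) = (\<integral>\<^sup>+x. f x \<partial>density (distr lborel borel (\<lambda>x. t + (-1) *\<^sub>R x)) (\<lambda>_. \<bar>-1::real\<bar>^DIM('a)))"
    by (subst lborel_affine[of "-1" t, symmetric]) auto
  also have "\<dots> = (\<integral>\<^sup>+x. f x \<partial>(distr lborel borel (\<lambda>x. t + (-1) *\<^sub>R x)))"
    by (simp add: density_1)
  also have "\<dots> = (\<integral>\<^sup>+x. f (t - x) \<partial>lborel)"
    by (subst nn_integral_distr) auto
  finally show ?thesis by simp
qed

lemma linear_borel_measurable:
  fixes U :: "'a::euclidean_space \<Rightarrow> 'b::euclidean_space"
  assumes "linear U" shows "U \<in> borel_measurable borel"
  by (intro borel_measurable_continuous_onI linear_continuous_on) (use assms linear_conv_bounded_linear in auto)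

lemma emeasure_lborel_ball_pos:
  fixes c :: "'a::euclidean_space"
  assumes "r > 0" shows "emeasure lborel (ball c r) \<noteq> 0"
proof
  assume "emeasure lborel (ball c r) = 0"
  then have "measure lborel (ball c r) = 0" by (simp add: measure_def)
  with content_ball_pos[OF assms, of c] show False by simp
qed

lemma lborel_orth:
  fixes U :: "'a::euclidean_space \<Rightarrow> 'a"
  assumes lin: "linear U" and nU: "\<And>x. norm (U x) = norm x"
  shows "distr lborel borel U = lborel"
proof (rule measure_eqI)
  fix A :: "'a set" assume A[measurable]: "A \<in> sets (distr lborel borel U)"
  then have A'[measurable]: "A \<in> sets borel" by simp
  have U[measurable]: "U \<in> borel_measurable borel" by (rule linear_borel_measurable[OF lin])
  have "inj U"
    using lin nU by (metis linear_injective_0 norm_eq_zero)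
  then have "surj U" using lin linear_injective_imp_surjective by blast
  define B :: "'a set" where "B = ball 0 1"
  have B[measurable]: "B \<in> sets borel" by (simp add: B_def)
  have UB: "\<And>x. indicator B (U x) = (indicator B x :: ennreal)"
    by (simp add: B_def indicator_def nU)
  have B0: "emeasure lborel B \<noteq> 0" unfolding B_def
    by (simp add: emeasure_lborel_ball_pos)
  have Binf: "emeasure lborel B \<noteq> \<infinity>" unfolding B_def
    using emeasure_lborel_ball_finite by (simp add: less_top)
  have eB: "\<And>t. (\<integral>\<^sup>+y. indicator B (t + y) \<partial>lborel) = emeasure lborel B"
    by (subst nn_integral_translate) auto
  have eA: "\<And>t. (\<integral>\<^sup>+y. indicator A (t - y) \<partial>lborel) = emeasure lborel A"
    by (subst nn_integral_reflect) auto
  have dA: "emeasure (distr lborel borel U) A = (\<integral>\<^sup>+x. indicator A (U x) \<partial>lborel)"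
  proof -
    have "emeasure (distr lborel borel U) A = emeasure lborel (U -` A)"
      by (subst emeasure_distr) auto
    also have "\<dots> = (\<integral>\<^sup>+x. indicator (U -` A) x \<partial>lborel)"
      by (rule nn_integral_indicator[symmetric]) (use measurable_sets_borel[OF U A'] in simp)
    finally show ?thesis by (simp add: indicator_def)
  qed
  have "emeasure (distr lborel borel U) A * emeasure lborel B
      = (\<integral>\<^sup>+x. indicator A (U x) * (\<integral>\<^sup>+y. indicator B (U x + y) \<partial>lborel) \<partial>lborel)"
    by (simp add: dA eB nn_integral_multc)
  also have "\<dots> = (\<integral>\<^sup>+x. (\<integral>\<^sup>+y. indicator A (U x) * indicator B (U x + y) \<partial>lborel) \<partial>lborel)"
    by (simp add: nn_integral_cmult)
  also have "\<dots> = (\<integral>\<^sup>+y. (\<integral>\<^sup>+x. indicator A (U x) * indicator B (U x + y) \<partial>lborel) \<partial>lborel)"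
    by (rule lborel_pair.Fubini') measurable
  also have "\<dots> = (\<integral>\<^sup>+y. (\<integral>\<^sup>+x. indicator A (U x - y) * indicator B (U x) \<partial>lborel) \<partial>lborel)"
  proof (rule nn_integral_cong)
    fix y
    obtain z where z: "U z = - y" using \<open>surj U\<close> by (metis surjD)
    have "(\<integral>\<^sup>+x. indicator A (U x) * indicator B (U x + y) \<partial>lborel)
        = (\<integral>\<^sup>+x. indicator A (U (z + x)) * indicator B (U (z + x) + y) \<partial>lborel)"
      by (rule nn_integral_translate[symmetric]) measurable
    also have "\<dots> = (\<integral>\<^sup>+x. indicator A (U x - y) * indicator B (U x) \<partial>lborel)"
      by (simp add: linear_add[OF lin] z)
    finally show "(\<integral>\<^sup>+x. indicator A (U x) * indicator B (U x + y) \<partial>lborel)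
        = (\<integral>\<^sup>+x. indicator A (U x - y) * indicator B (U x) \<partial>lborel)" .
  qed
  also have "\<dots> = (\<integral>\<^sup>+x. (\<integral>\<^sup>+y. indicator A (U x - y) * indicator B (U x) \<partial>lborel) \<partial>lborel)"
    by (rule lborel_pair.Fubini'[symmetric]) measurable
  also have "\<dots> = (\<integral>\<^sup>+x. emeasure lborel A * indicator B x \<partial>lborel)"
    by (simp add: nn_integral_multc eA UB)
  also have "\<dots> = emeasure lborel A * emeasure lborel B"
    by (simp add: nn_integral_cmult)
  finally have "emeasure (distr lborel borel U) A * emeasure lborel B = emeasure lborel A * emeasure lborel B" .
  then show "emeasure (distr lborel borel U) A = emeasure lborel A"
  proof -
    have Bt: "emeasure lborel B \<noteq> top" using Binf by simp
    have "emeasure (distr lborel borel U) A = emeasure (distr lborel borel U) A * emeasure lborel B / emeasure lborel B"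
      using mult_divide_eq_ennreal[OF B0 Bt] by simp
    also have "\<dots> = emeasure lborel A"
      unfolding \<open>emeasure (distr lborel borel U) A * emeasure lborel B = emeasure lborel A * emeasure lborel B\<close>
      using mult_divide_eq_ennreal[OF B0 Bt] by simp
    finally show ?thesis .
  qed
qed simp



definition gd :: "'a::euclidean_space \<Rightarrow> real" where
  "gd y = (\<Prod>b\<in>Basis. std_normal_density (y \<bullet> b))"

definition gam :: "'a::euclidean_space measure" where
  "gam = density lborel (\<lambda>y. ennreal (gd y))"

lemma gd_eq: "gd (y::'a::euclidean_space) = (1 / sqrt (2 * pi)) ^ DIM('a) * exp (- (norm y)\<^sup>2 / 2)"
proof -
  have "(norm y)\<^sup>2 = (\<Sum>b\<in>Basis. (y \<bullet> b)\<^sup>2)"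
    unfolding power2_norm_eq_inner by (subst euclidean_inner) (simp add: power2_eq_square)
  then have "exp (- (norm y)\<^sup>2 / 2) = (\<Prod>b\<in>(Basis::'a set). exp (- (y \<bullet> b)\<^sup>2 / 2))"
    by (simp add: exp_sum[symmetric] sum_negf sum_divide_distrib)
  moreover have "gd y = (\<Prod>b\<in>(Basis::'a set). 1 / sqrt (2 * pi)) * (\<Prod>b\<in>(Basis::'a set). exp (- (y \<bullet> b)\<^sup>2 / 2))"
    by (simp only: gd_def std_normal_density_def prod.distrib)
  ultimately show ?thesis
    by (simp only: prod_constant)
qed

lemma gd_pos: "gd y > 0"
  by (simp add: gd_eq)

lemma gd_borel[measurable]: "gd \<in> borel_measurable borel"
  unfolding gd_def by measurable

lemma gd_norm_eq: "norm (x::'a::euclidean_space) = norm (y::'a) \<Longrightarrow> gd x = gd y"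
  by (simp add: gd_eq)

lemma gd_norm_less: "norm (x::'a::euclidean_space) < norm (y::'a) \<Longrightarrow> gd y < gd x"
proof -
  assume "norm x < norm y"
  then have "(norm x)\<^sup>2 < (norm y)\<^sup>2" by (simp add: power_strict_mono)
  then have "exp (- (norm y)\<^sup>2 / 2) < exp (- (norm x)\<^sup>2 / 2)" by simp
  moreover have "(0::real) < (1 / sqrt (2 * pi)) ^ DIM('a)" by simp
  ultimately show ?thesis by (simp add: gd_eq)
qed

lemma nn_integral_gd: "(\<integral>\<^sup>+y. ennreal (gd (y::'a::euclidean_space)) \<partial>lborel) = 1"
proof -
  have "(\<integral>\<^sup>+y. ennreal (gd (y::'a)) \<partial>lborel) = (\<integral>\<^sup>+y. (\<Prod>b\<in>Basis. ennreal (std_normal_density ((y::'a) \<bullet> b))) \<partial>lborel)"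
    by (simp add: gd_def prod_ennreal)
  also have "\<dots> = (\<Prod>b\<in>(Basis::'a set). (\<integral>\<^sup>+x. ennreal (std_normal_density x) \<partial>lborel))"
    by (rule nn_integral_lborel_prod) auto
  also have "(\<integral>\<^sup>+x. ennreal (std_normal_density x) \<partial>lborel) = 1"
  proof -
    interpret prob_space "density lborel (std_normal_density)"
      by (rule prob_space_normal_density) simp
    show ?thesis using emeasure_space_1 by (simp add: emeasure_density)
  qed
  finally show ?thesis by simp
qed

lemma prob_space_gam: "prob_space (gam :: 'a::euclidean_space measure)"
  by (rule prob_spaceI) (simp add: gam_def emeasure_density nn_integral_gd)

lemma sets_gam[simp, measurable_cong]: "sets gam = sets borel"
  by (simp add: gam_def)

lemma space_gam[simp]: "space gam = UNIV"
  by (simp add: gam_def)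

lemma emeasure_gam: "A \<in> sets borel \<Longrightarrow> emeasure gam A = (\<integral>\<^sup>+y. ennreal (gd y) * indicator A y \<partial>lborel)"
  by (simp add: gam_def emeasure_density)

lemma nn_integral_affine_iso:
  fixes U :: "'a::euclidean_space \<Rightarrow> 'a"
  assumes lin: "linear U" and nU: "\<And>x. norm (U x) = norm x"
  assumes [measurable]: "f \<in> borel_measurable borel"
  shows "(\<integral>\<^sup>+y. f (t + U y) \<partial>lborel) = (\<integral>\<^sup>+y. f y \<partial>lborel)"
proof -
  have U[measurable]: "U \<in> borel_measurable borel" by (rule linear_borel_measurable[OF lin])
  have "(\<integral>\<^sup>+y. f (t + U y) \<partial>lborel) = (\<integral>\<^sup>+y. f (t + y) \<partial>distr lborel borel U)"
    by (subst nn_integral_distr) auto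
  also have "\<dots> = (\<integral>\<^sup>+y. f (t + y) \<partial>lborel)"
    by (simp add: lborel_orth[OF lin nU])
  also have "\<dots> = (\<integral>\<^sup>+y. f y \<partial>lborel)"
    by (rule nn_integral_translate) simp
  finally show ?thesis .
qed

lemma distr_gam_orth:
  fixes U :: "'a::euclidean_space \<Rightarrow> 'a"
  assumes lin: "linear U" and nU: "\<And>x. norm (U x) = norm x"
  shows "distr gam borel U = gam"
proof (rule measure_eqI)
  have U[measurable]: "U \<in> borel_measurable borel" by (rule linear_borel_measurable[OF lin])
  fix A :: "'a set" assume "A \<in> sets (distr gam borel U)"
  then have A[measurable]: "A \<in> sets borel" by simp
  have "emeasure (distr gam borel U) A = emeasure gam (U -` A)"
    by (subst emeasure_distr) auto
  also have "\<dots> = (\<integral>\<^sup>+y. ennreal (gd y) * indicator (U -` A) y \<partial>lborel)"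
    by (rule emeasure_gam) (use measurable_sets_borel[OF U A] in simp)
  also have "\<dots> = (\<integral>\<^sup>+y. ennreal (gd (0 + U y)) * indicator A (0 + U y) \<partial>lborel)"
    by (intro nn_integral_cong) (simp add: gd_norm_eq[OF nU] indicator_def)
  also have "\<dots> = (\<integral>\<^sup>+y. ennreal (gd y) * indicator A y \<partial>lborel)"
    by (rule nn_integral_affine_iso[OF lin nU]) simp
  also have "\<dots> = emeasure gam A" by (simp add: emeasure_gam)
  finally show "emeasure (distr gam borel U) A = emeasure gam A" .
qed simp

lemma not_AE_ball:
  fixes c :: "'a::euclidean_space"
  assumes "r > 0" "\<And>y. y \<in> ball c r \<Longrightarrow> \<not> P y"
  shows "\<not> (AE y in lborel. P y)"
proof
  assume "AE y in lborel. P y"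
  then have "AE y in lborel. y \<notin> ball c r"
    by (rule eventually_mono) (use assms(2) in blast)
  then have "emeasure lborel (ball c r) = 0"
    by (subst (asm) AE_iff_measurable[of "ball c r"]) auto
  with emeasure_lborel_ball_pos[OF assms(1), of c] show False by simp
qed

lemma gam_pos:
  fixes c :: "'a::euclidean_space"
  assumes S[measurable]: "S \<in> sets borel" and "r > 0" "ball c r \<subseteq> S"
  shows "emeasure gam S > 0"
proof -
  have "\<not> (AE y in lborel. ennreal (gd y) * indicator S y = 0)"
    by (rule not_AE_ball[OF \<open>r>0\<close>, of c]) (use assms(3) gd_pos in \<open>auto simp: indicator_def ennreal_eq_0_iff not_le\<close>)
  then have "(\<integral>\<^sup>+y. ennreal (gd y) * indicator S y \<partial>lborel) \<noteq> 0"
    by (subst nn_integral_0_iff_AE) auto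
  then show ?thesis by (simp add: emeasure_gam zero_less_iff_neq_zero)
qed



lemma measure_gam_UNIV: "measure gam (UNIV :: 'a::euclidean_space set) = 1"
proof -
  interpret prob_space "gam :: 'a measure" by (rule prob_space_gam)
  show ?thesis using prob_space by simp
qed

lemma emeasure_gam_real: "emeasure (gam :: 'a::euclidean_space measure) A = ennreal (measure gam A)"
proof -
  interpret prob_space "gam :: 'a measure" by (rule prob_space_gam)
  show ?thesis by (simp add: emeasure_eq_measure)
qed

lemma half_pos:
  fixes u :: "'a::euclidean_space"
  assumes u: "u \<noteq> 0" and b: "\<beta> > 0"
  shows "measure gam {y. u \<bullet> y \<le> \<beta>} > 1/2"
proof -
  interpret prob_space "gam :: 'a measure" by (rule prob_space_gam)
  have neg: "linear (uminus :: 'a \<Rightarrow> 'a)" by (simp add: linear_uminus)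
  have "measure gam {y. u \<bullet> y \<ge> 0} = measure (distr gam borel uminus) {y. u \<bullet> y \<ge> 0}"
    by (simp add: distr_gam_orth[OF neg])
  also have "\<dots> = measure gam (uminus -` {y. u \<bullet> y \<ge> 0})"
    by (subst measure_distr) auto
  also have "uminus -` {y. u \<bullet> y \<ge> 0} = {y. u \<bullet> y \<le> 0}" by auto
  finally have eq: "measure gam {y. u \<bullet> y \<ge> 0} = measure gam {y. u \<bullet> y \<le> 0}" .
  have "1 = measure gam ({y. u \<bullet> y \<le> 0} \<union> {y. u \<bullet> y \<ge> 0})"
    by (subgoal_tac "{y. u \<bullet> y \<le> 0} \<union> {y. u \<bullet> y \<ge> 0} = UNIV") (auto simp: measure_gam_UNIV)
  also have "\<dots> \<le> measure gam {y. u \<bullet> y \<le> 0} + measure gam {y. u \<bullet> y \<ge> 0}"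
    by (rule measure_subadditive) auto
  finally have h: "measure gam {y. u \<bullet> y \<le> 0} \<ge> 1/2" using eq by simp
  define z where "z = (\<beta> / 2 / (u \<bullet> u)) *\<^sub>R u"
  define e where "e = \<beta> / 2 / norm u"
  have e: "e > 0" using u b by (simp add: e_def)
  have uz: "u \<bullet> z = \<beta> / 2" using u by (simp add: z_def)
  have "ball z e \<subseteq> {y. 0 < u \<bullet> y \<and> u \<bullet> y \<le> \<beta>}"
  proof
    fix y assume "y \<in> ball z e"
    then have "norm (y - z) < e" by (simp add: dist_norm norm_minus_commute)
    moreover have "\<bar>u \<bullet> (y - z)\<bar> \<le> norm u * norm (y - z)" by (rule Cauchy_Schwarz_ineq2)
    moreover have "norm u * norm (y - z) < norm u * e"
      using \<open>norm (y - z) < e\<close> u by simp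
    moreover have "norm u * e = \<beta> / 2" using u by (simp add: e_def)
    ultimately have "\<bar>u \<bullet> (y - z)\<bar> < \<beta> / 2" by linarith
    then show "y \<in> {y. 0 < u \<bullet> y \<and> u \<bullet> y \<le> \<beta>}" using uz by (auto simp: inner_diff_right)
  qed
  then have "emeasure gam {y. 0 < u \<bullet> y \<and> u \<bullet> y \<le> \<beta>} > 0"
    by (intro gam_pos[OF _ e]) auto
  then have slab: "measure gam {y. 0 < u \<bullet> y \<and> u \<bullet> y \<le> \<beta>} > 0"
    by (simp add: emeasure_gam_real)
  have "measure gam {y. u \<bullet> y \<le> \<beta>} = measure gam ({y. u \<bullet> y \<le> 0} \<union> {y. 0 < u \<bullet> y \<and> u \<bullet> y \<le> \<beta>})"
    using b by (intro arg_cong[where f="measure gam"]) auto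
  also have "\<dots> = measure gam {y. u \<bullet> y \<le> 0} + measure gam {y. 0 < u \<bullet> y \<and> u \<bullet> y \<le> \<beta>}"
    by (rule finite_measure_Union) auto
  finally show ?thesis using h slab by simp
qed

lemma half_space:
  fixes u :: "'a::euclidean_space"
  assumes u: "u \<noteq> 0" and m: "measure gam {y. u \<bullet> y \<le> \<beta>} = 1/2"
  shows "\<beta> = 0"
proof (rule ccontr)
  interpret prob_space "gam :: 'a measure" by (rule prob_space_gam)
  assume "\<beta> \<noteq> 0"
  then consider "\<beta> > 0" | "\<beta> < 0" by linarith
  then show False
  proof cases
    case 1 with half_pos[OF u 1] m show False by simp
  next
    case 2
    have "-u \<noteq> 0" using u by simp
    from half_pos[OF this, of "-\<beta>/2"] 2
    have "measure gam {y. (-u) \<bullet> y \<le> -\<beta>/2} > 1/2" by simp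
    moreover have "measure gam {y. (-u) \<bullet> y \<le> -\<beta>/2} \<le> measure gam (UNIV - {y. u \<bullet> y \<le> \<beta>})"
      using 2 by (intro finite_measure_mono) auto
    moreover have "measure gam (UNIV - {y. u \<bullet> y \<le> \<beta>}) = 1 - measure gam {y. u \<bullet> y \<le> \<beta>}"
      using finite_measure_compl[of "{y. u \<bullet> y \<le> \<beta>}"] by (simp add: measure_gam_UNIV)
    ultimately show False using m by simp
  qed
qed



lemma ball_mono:
  fixes w w' :: "'a::euclidean_space"
  assumes r: "r > 0" and lt: "norm w < norm w'"
  shows "measure gam (cball w' r) < measure gam (cball w r)"
proof -
  interpret prob_space "gam :: 'a measure" by (rule prob_space_gam)
  define \<delta> where "\<delta> = norm (w' - w)"
  have "w \<noteq> w'" using lt by auto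
  then have d: "\<delta> > 0" by (simp add: \<delta>_def)
  define n where "n = (1 / \<delta>) *\<^sub>R (w' - w)"
  have nn: "n \<bullet> n = 1" using d
    by (simp add: n_def \<delta>_def power2_norm_eq_inner[symmetric] divide_simps)
  have nnorm: "norm n = 1" using nn by (simp add: norm_eq_sqrt_inner)
  have w': "w' = w + \<delta> *\<^sub>R n" using d by (simp add: n_def)
  define m where "m = w + (\<delta> / 2) *\<^sub>R n"
  define H where "H y = y - (2 * (y \<bullet> n)) *\<^sub>R n" for y
  have linH: "linear H" unfolding H_def
    by (intro linear_compose_sub linearI) (auto simp: inner_add_left algebra_simps scaleR_add_left)
  have HH: "H y \<bullet> H y = y \<bullet> y" for y
    by (simp add: H_def inner_diff_left inner_diff_right inner_commute nn algebra_simps power2_eq_square)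
  have nH: "norm (H y) = norm y" for y
    using HH by (simp add: norm_eq_sqrt_inner)
  define t where "t = (2 * (m \<bullet> n)) *\<^sub>R n"
  define \<sigma> where "\<sigma> y = t + H y" for y
  have sig: "\<sigma> y = y - (2 * ((y - m) \<bullet> n)) *\<^sub>R n" for y
    by (simp add: \<sigma>_def t_def H_def inner_diff_left algebra_simps)
  have sw: "\<sigma> w = w'"
    by (simp add: sig m_def w' inner_diff_left nn algebra_simps)
  have sw': "\<sigma> w' = w"
    by (simp add: sig m_def w' inner_diff_left inner_add_left nn algebra_simps)
  have sdist: "dist (\<sigma> y) (\<sigma> z) = dist y z" for y z
  proof -
    have "\<sigma> y - \<sigma> z = H (y - z)" by (simp add: \<sigma>_def linear_diff[OF linH])
    then show ?thesis by (simp add: dist_norm nH)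
  qed
  let ?B = "cball w r" and ?B' = "cball w' r"
  have inB: "\<sigma> y \<in> ?B \<longleftrightarrow> y \<in> ?B'" for y
    using sdist[of w' y] by (simp add: sw')
  have inB': "\<sigma> y \<in> ?B' \<longleftrightarrow> y \<in> ?B" for y
    using sdist[of w y] by (simp add: sw)
  have mn: "m \<bullet> n > 0"
  proof -
    have "(norm w')\<^sup>2 = (norm w)\<^sup>2 + 2 * \<delta> * (w \<bullet> n) + \<delta>\<^sup>2"
      unfolding power2_norm_eq_inner w' by (simp add: inner_add_left inner_add_right inner_commute nn algebra_simps power2_eq_square)
    moreover have "(norm w)\<^sup>2 < (norm w')\<^sup>2" using lt by (simp add: power_strict_mono)
    ultimately have "0 < 2 * \<delta> * (w \<bullet> n) + \<delta>\<^sup>2" by linarith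
    then have "0 < \<delta> * (2 * (w \<bullet> n) + \<delta>)" by (simp add: algebra_simps power2_eq_square)
    then have "0 < 2 * (w \<bullet> n) + \<delta>" using d by (simp add: zero_less_mult_iff)
    then show ?thesis by (simp add: m_def inner_add_left nn)
  qed
  have normlt: "norm y < norm (\<sigma> y)" if "y \<in> ?B" "y \<notin> ?B'" for y
  proof -
    define s where "s = (y - m) \<bullet> n"
    have "dist y w < dist y w'" using that by (simp add: dist_commute)
    then have "(norm (y - w))\<^sup>2 < (norm (y - w'))\<^sup>2" by (simp add: dist_norm power_strict_mono)
    moreover have "(norm (y - w'))\<^sup>2 = (norm (y - w))\<^sup>2 - 2 * \<delta> * ((y - w) \<bullet> n) + \<delta>\<^sup>2"
      unfolding power2_norm_eq_inner w' by (simp add: inner_diff_left inner_diff_right inner_add_left inner_add_right inner_commute nn algebra_simps power2_eq_square)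
    ultimately have "0 < \<delta> * (\<delta> - 2 * ((y - w) \<bullet> n))" by (simp add: algebra_simps power2_eq_square)
    then have "0 < \<delta> - 2 * ((y - w) \<bullet> n)" using d by (simp add: zero_less_mult_iff)
    then have s: "s < 0" by (simp add: s_def m_def inner_diff_left inner_add_left nn algebra_simps)
    have "(norm (\<sigma> y))\<^sup>2 = (norm y)\<^sup>2 - 4 * s * (m \<bullet> n)"
      unfolding power2_norm_eq_inner sig by (simp add: s_def inner_diff_left inner_diff_right inner_commute nn algebra_simps power2_eq_square)
    moreover have "0 < - 4 * s * (m \<bullet> n)" using s mn by (simp add: mult_neg_pos zero_less_mult_iff)
    ultimately have "(norm y)\<^sup>2 < (norm (\<sigma> y))\<^sup>2" by linarith
    then show ?thesis by (simp add: power2_less_imp_less)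
  qed
  have H[measurable]: "H \<in> borel_measurable borel" by (rule linear_borel_measurable[OF linH])
  have Bm[measurable]: "?B - ?B' \<in> sets borel" "?B' - ?B \<in> sets borel" by auto
  have ind: "indicator (?B' - ?B) (\<sigma> y) = (indicator (?B - ?B') y :: ennreal)" for y
    using inB[of y] inB'[of y] by (simp add: indicator_def)
  have eq1: "emeasure gam (?B' - ?B) = (\<integral>\<^sup>+y. ennreal (gd (\<sigma> y)) * indicator (?B - ?B') y \<partial>lborel)"
  proof -
    have "emeasure gam (?B' - ?B) = (\<integral>\<^sup>+z. ennreal (gd z) * indicator (?B' - ?B) z \<partial>lborel)"
      by (rule emeasure_gam) simp
    also have "\<dots> = (\<integral>\<^sup>+y. ennreal (gd (t + H y)) * indicator (?B' - ?B) (t + H y) \<partial>lborel)"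
      by (rule nn_integral_affine_iso[OF linH nH, symmetric]) simp
    also have "\<dots> = (\<integral>\<^sup>+y. ennreal (gd (\<sigma> y)) * indicator (?B - ?B') y \<partial>lborel)"
      using ind by (simp add: \<sigma>_def)
    finally show ?thesis .
  qed
  have eq2: "emeasure gam (?B - ?B') = (\<integral>\<^sup>+y. ennreal (gd y) * indicator (?B - ?B') y \<partial>lborel)"
    by (rule emeasure_gam) simp
  define e where "e = min r \<delta> / 3"
  have e: "e > 0" using r d by (simp add: e_def)
  define z0 where "z0 = w - (r - e) *\<^sub>R n"
  have ballsub: "ball z0 e \<subseteq> ?B - ?B'"
  proof
    fix y assume y: "y \<in> ball z0 e"
    have "dist z0 w = r - e" using e r by (simp add: z0_def dist_norm nnorm e_def)
    moreover have "dist z0 w' = r - e + \<delta>"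
    proof -
      have "z0 - w' = - (r - e + \<delta>) *\<^sub>R n" by (simp add: z0_def w' algebra_simps)
      then show ?thesis using e r d by (simp add: dist_norm nnorm e_def)
    qed
    moreover have "dist z0 y < e" using y by simp
    moreover have "dist y w \<le> dist y z0 + dist z0 w" by (rule dist_triangle)
    moreover have "dist z0 w' \<le> dist z0 y + dist y w'" by (rule dist_triangle)
    moreover have "3 * e \<le> \<delta>" by (simp add: e_def)
    moreover note e dist_commute[of y z0] dist_commute[of y w] dist_commute[of y w']
    ultimately have "dist w y \<le> r" "\<not> dist w' y \<le> r" by linarith+
    then show "y \<in> ?B - ?B'" by simp
  qed
  have less: "(\<integral>\<^sup>+y. ennreal (gd (\<sigma> y)) * indicator (?B - ?B') y \<partial>lborel)
      < (\<integral>\<^sup>+y. ennreal (gd y) * indicator (?B - ?B') y \<partial>lborel)"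
  proof (rule nn_integral_less)
    show "(\<lambda>y. ennreal (gd (\<sigma> y)) * indicator (?B - ?B') y) \<in> borel_measurable lborel"
      unfolding \<sigma>_def by measurable
    show "(\<lambda>y. ennreal (gd y) * indicator (?B - ?B') y) \<in> borel_measurable lborel"
      by measurable
    show "(\<integral>\<^sup>+y. ennreal (gd (\<sigma> y)) * indicator (?B - ?B') y \<partial>lborel) \<noteq> \<infinity>"
      unfolding eq1[symmetric] by (simp add: emeasure_gam_real)
    have pt: "gd (\<sigma> y) < gd y" if "y \<in> ?B - ?B'" for y
      using normlt[of y] that by (intro gd_norm_less) auto
    show "AE y in lborel. ennreal (gd (\<sigma> y)) * indicator (?B - ?B') y \<le> ennreal (gd y) * indicator (?B - ?B') y"
    proof (intro AE_I2)
      fix y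
      show "ennreal (gd (\<sigma> y)) * indicator (?B - ?B') y \<le> ennreal (gd y) * indicator (?B - ?B') y"
      proof (cases "y \<in> ?B - ?B'")
        case True
        then have "gd (\<sigma> y) \<le> gd y" using pt[of y] by simp
        then show ?thesis using True by (simp add: ennreal_leI)
      qed simp
    qed
    show "\<not> (AE y in lborel. ennreal (gd y) * indicator (?B - ?B') y \<le> ennreal (gd (\<sigma> y)) * indicator (?B - ?B') y)"
    proof (rule not_AE_ball[OF e, of z0])
      fix y assume "y \<in> ball z0 e"
      then have "y \<in> ?B - ?B'" using ballsub by blast
      then show "\<not> ennreal (gd y) * indicator (?B - ?B') y \<le> ennreal (gd (\<sigma> y)) * indicator (?B - ?B') y"
        using pt[of y] gd_pos[of "\<sigma> y"] by (simp add: indicator_def ennreal_le_iff not_le)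
    qed
  qed
  have mlt: "measure gam (?B' - ?B) < measure gam (?B - ?B')"
    using less unfolding eq1[symmetric] eq2[symmetric] by (simp add: emeasure_gam_real ennreal_less_iff)
  have s1: "measure gam ?B = measure gam (?B \<inter> ?B') + measure gam (?B - ?B')"
    by (subst finite_measure_Union[symmetric]) (auto intro!: arg_cong[where f="measure gam"])
  have s2: "measure gam ?B' = measure gam (?B \<inter> ?B') + measure gam (?B' - ?B)"
    by (subst finite_measure_Union[symmetric]) (auto intro!: arg_cong[where f="measure gam"])
  show ?thesis using s1 s2 mlt by simp
qed



lemma subseq_principle:
  fixes a :: "nat \<Rightarrow> real"
  assumes H: "\<And>r. strict_mono r \<Longrightarrow> \<exists>r' :: nat \<Rightarrow> nat. strict_mono r' \<and> (\<lambda>i. a (r (r' i))) \<longlonglongrightarrow> A"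
  shows "a \<longlonglongrightarrow> A"
proof (rule ccontr)
  assume "\<not> a \<longlonglongrightarrow> A"
  then have "\<not> (\<forall>e>0. \<exists>N. \<forall>n\<ge>N. norm (a n - A) < e)"
    by (simp add: LIMSEQ_iff)
  then obtain e where e: "e > 0" and fr: "\<forall>N. \<exists>n\<ge>N. \<not> norm (a n - A) < e"
    by blast
  define S where "S = {n. \<not> norm (a n - A) < e}"
  have "\<forall>m. \<exists>n\<ge>m. n \<in> S" using fr unfolding S_def by blast
  then have "infinite S"
    by (simp add: infinite_nat_iff_unbounded_le)
  from infinite_enumerate[OF this] obtain r :: "nat \<Rightarrow> nat" where sm: "strict_mono r" and inS: "\<forall>n. r n \<in> S"
    by blast
  obtain r' where "strict_mono r'" and lim: "(\<lambda>i. a (r (r' i))) \<longlonglongrightarrow> A"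
    using H[OF sm] by blast
  from lim e obtain N where N: "\<forall>n\<ge>N. norm (a (r (r' n)) - A) < e"
    unfolding LIMSEQ_iff by blast
  have "norm (a (r (r' N)) - A) < e" using N by simp
  moreover have "r (r' N) \<in> S" using inS by blast
  ultimately show False unfolding S_def by simp
qed

lemma subspace_closest_point_in:
  "subspace (L :: 'a::euclidean_space set) \<Longrightarrow> closest_point L x \<in> L"
  by (intro closest_point_in_set closed_subspace) (auto dest: subspace_0)

lemma subspace_closest_point_orth:
  fixes L :: "'a::euclidean_space set"
  assumes L: "subspace L" and a: "a \<in> L"
  shows "a \<bullet> (x - closest_point L x) = 0"
proof -
  let ?p = "closest_point L x"
  have p: "?p \<in> L" by (rule subspace_closest_point_in[OF L])
  have cv: "convex L" "closed L" using L by (auto simp: subspace_imp_convex closed_subspace)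
  have pa: "?p + a \<in> L" "?p - a \<in> L" using L p a by (auto intro: subspace_add subspace_diff)
  have 1: "inner (x - ?p) ((?p + a) - ?p) \<le> 0"
    by (rule closest_point_dot[OF cv pa(1)])
  have 2: "inner (x - ?p) ((?p - a) - ?p) \<le> 0"
    by (rule closest_point_dot[OF cv pa(2)])
  have "(?p + a) - ?p = a" "(?p - a) - ?p = - a" by simp_all
  with 1 2 have "inner (x - ?p) a \<le> 0" "- inner (x - ?p) a \<le> 0" by simp_all
  then have "inner (x - ?p) a = 0" by linarith
  then show ?thesis by (simp add: inner_commute)
qed

lemma subspace_closest_point_inner:
  fixes L :: "'a::euclidean_space set"
  assumes L: "subspace L" and a: "a \<in> L"
  shows "a \<bullet> closest_point L x = a \<bullet> x"
  using subspace_closest_point_orth[OF L a, of x] by (simp add: inner_diff_right)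

lemma subspace_closest_point_0:
  "subspace (L :: 'a::euclidean_space set) \<Longrightarrow> closest_point L 0 = 0"
  by (rule closest_point_self) (rule subspace_0)

definition iso :: "'k::finite itself \<Rightarrow> (real^'n::finite) set \<Rightarrow> real^'k \<Rightarrow> real^'n" where
  "iso K L = (SOME f :: real^'k \<Rightarrow> real^'n. linear f \<and> (\<forall>x. norm (f x) = norm x) \<and> range f = L)"

lemma lebesgue_on_subspace_iso: "lebesgue_on_subspace K L = distr lborel borel (iso K L)"
  by (simp add: lebesgue_on_subspace_def iso_def)

lemma iso_props:
  assumes "k_subspace (K :: 'k::finite itself) (L :: (real^'n::finite) set)"
  shows "linear (iso K L) \<and> (\<forall>x. norm (iso K L x) = norm x) \<and> range (iso K L) = L"
proof -
  have L: "subspace L" "dim L = CARD('k)" using assms by (auto simp: k_subspace_def)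
  have d1: "dim (UNIV :: (real^'k) set) = CARD('k)" by simp
  have dd: "dim (UNIV :: (real^'k) set) = dim L" using L(2) d1 by simp
  have "\<exists>f :: real^'k \<Rightarrow> real^'n. linear f \<and> (\<forall>x. norm (f x) = norm x) \<and> range f = L"
    by (rule isometries_subspaces[OF subspace_UNIV L(1) dd]) auto
  then show ?thesis unfolding iso_def by (rule someI_ex)
qed

definition massL :: "'k::finite itself \<Rightarrow> real^'n \<Rightarrow> (real^'n::finite) set \<Rightarrow> (real^'n) measure" where
  "massL K p L = distr (gam :: (real^'k) measure) borel (\<lambda>y. closest_point L p + iso K L y)"

lemma gam_null:
  fixes S :: "'a::euclidean_space set"
  assumes S[measurable]: "S \<in> sets borel" and z: "emeasure lborel S = 0"
  shows "emeasure gam S = 0"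
proof -
  have "AE y in lborel. y \<notin> S"
    using z by (subst AE_iff_measurable[of S]) auto
  then have "AE y in lborel. ennreal (gd y) * indicator S y = 0"
    by (rule eventually_mono) simp
  then show ?thesis
    by (simp add: emeasure_gam nn_integral_0_iff_AE)
qed

lemma mass_distribution_massL:
  assumes kL: "k_subspace (K :: 'k::finite itself) (L :: (real^'n::finite) set)"
  shows "mass_distribution K L (massL K p L)"
proof -
  have L: "subspace L" using kL by (simp add: k_subspace_def)
  note I = iso_props[OF kL]
  let ?F = "iso K L" and ?c = "closest_point L p"
  have F[measurable]: "?F \<in> borel_measurable borel" using I linear_borel_measurable by blast
  have phi[measurable]: "(\<lambda>y. ?c + ?F y) \<in> borel_measurable borel" by measurable
  have cL: "?c \<in> L" by (rule subspace_closest_point_in[OF L])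
  then obtain v where v: "?F v = ?c" using I by (metis rangeE)
  have inL: "?c + ?F y \<in> L" for y
  proof -
    have "?F y \<in> L" using I by blast
    then show ?thesis using cL L by (simp add: subspace_add)
  qed
  have "prob_space (massL K p L)"
    unfolding massL_def
    by (rule prob_space.prob_space_distr[OF prob_space_gam]) simp
  moreover have "emeasure (massL K p L) (UNIV - L) = 0"
  proof -
    have e: "(\<lambda>y. ?c + ?F y) -` (UNIV - L) = {}" using inL by auto
    show ?thesis
      unfolding massL_def using closed_subspace[OF L]
      by (subst emeasure_distr) (auto simp: e)
  qed
  moreover have "absolutely_continuous (lebesgue_on_subspace K L) (massL K p L)"
    unfolding absolutely_continuous_def lebesgue_on_subspace_iso
  proof
    fix N assume "N \<in> null_sets (distr lborel borel ?F)"
    then have N[measurable]: "N \<in> sets borel" and N0: "emeasure lborel (?F -` N) = 0"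
      by (auto simp: null_sets_def emeasure_distr)
    have FN[measurable]: "?F -` N \<in> sets borel" using measurable_sets_borel[OF F N] .
    have pre: "(\<lambda>y. ?c + ?F y) -` N = (\<lambda>y. v + y) -` (?F -` N)"
      using I v by (auto simp: linear_add)
    have TN: "(\<lambda>y. v + y) -` (?F -` N) \<in> sets borel"
      by (rule measurable_sets_borel[OF _ FN]) simp
    have "emeasure lborel ((\<lambda>y. v + y) -` (?F -` N)) = (\<integral>\<^sup>+y. indicator (?F -` N) (v + y) \<partial>lborel)"
    proof -
      have "emeasure lborel ((\<lambda>y. v + y) -` (?F -` N)) = (\<integral>\<^sup>+y. indicator ((\<lambda>y. v + y) -` (?F -` N)) y \<partial>lborel)"
        by (rule nn_integral_indicator[symmetric]) (use TN in simp)
      then show ?thesis by (simp add: indicator_def)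
    qed
    also have "\<dots> = emeasure lborel (?F -` N)"
      by (subst nn_integral_translate) auto
    finally have "emeasure lborel ((\<lambda>y. ?c + ?F y) -` N) = 0" using N0 pre by simp
    then have "emeasure gam ((\<lambda>y. ?c + ?F y) -` N) = 0"
      by (intro gam_null) (use measurable_sets_borel[OF phi N] in simp)
    then show "N \<in> null_sets (massL K p L)"
      unfolding massL_def by (auto simp: null_sets_def emeasure_distr)
  qed
  ultimately show ?thesis
    unfolding mass_distribution_def by (simp add: massL_def)
qed



lemma lin_expand:
  fixes f :: "real^'k::finite \<Rightarrow> 'b::real_vector"
  assumes "linear f"
  shows "f y = (\<Sum>j\<in>UNIV. y $ j *\<^sub>R f (axis j 1))"
proof -
  have "y = (\<Sum>j\<in>UNIV. y $ j *\<^sub>R axis j 1)"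
    using basis_expansion[of y] by (simp add: scalar_mult_eq_scaleR)
  then have "f y = f (\<Sum>j\<in>UNIV. y $ j *\<^sub>R axis j 1)" by simp
  also have "\<dots> = (\<Sum>j\<in>UNIV. y $ j *\<^sub>R f (axis j 1))"
    using assms by (simp add: linear_sum linear_scale)
  finally show ?thesis .
qed

lemma massL_cont:
  fixes K :: "'k::finite itself" and L :: "(real^'n::finite) set"
  assumes kLs: "\<And>i. k_subspace K (Ls i)" and kL: "k_subspace K L" and gt: "grass_tendsto Ls L"
    and gc: "continuous_on UNIV g" and gb: "bounded (range g)"
  shows "(\<lambda>i. integral\<^sup>L (massL K p (Ls i)) g) \<longlonglongrightarrow> integral\<^sup>L (massL K p L) (g :: real^'n \<Rightarrow> real)"
proof -
  interpret gp: prob_space "gam :: (real^'k) measure" by (rule prob_space_gam)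
  have g[measurable]: "g \<in> borel_measurable borel" by (rule borel_measurable_continuous_onI[OF gc])
  obtain B where B: "\<And>x. norm (g x) \<le> B" using gb by (auto simp: bounded_iff)
  have gcont: "isCont g x" for x using gc by (simp add: continuous_on_eq_continuous_at)
  have Lsub: "subspace (Ls i)" for i using kLs by (simp add: k_subspace_def)
  have Lsub0: "subspace L" using kL by (simp add: k_subspace_def)
  define F where "F i = iso K (Ls i)" for i
  define F0 where "F0 = iso K L"
  define c where "c i = closest_point (Ls i) p" for i
  define c0 where "c0 = closest_point L p"
  have IF: "linear (F i) \<and> (\<forall>x. norm (F i x) = norm x) \<and> range (F i) = Ls i" for i
    unfolding F_def by (rule iso_props[OF kLs])
  have IF0: "linear F0 \<and> (\<forall>x. norm (F0 x) = norm x) \<and> range F0 = L"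
    unfolding F0_def by (rule iso_props[OF kL])
  have Fm[measurable]: "F i \<in> borel_measurable borel" for i using IF linear_borel_measurable by blast
  have F0m[measurable]: "F0 \<in> borel_measurable borel" using IF0 linear_borel_measurable by blast
  have ceq: "integral\<^sup>L (massL K p (Ls i)) g = (\<integral>y. g (c i + F i y) \<partial>gam)" for i
    unfolding massL_def F_def[symmetric] c_def[symmetric] by (subst integral_distr) auto
  have ceq0: "integral\<^sup>L (massL K p L) g = (\<integral>y. g (c0 + F0 y) \<partial>gam)"
    unfolding massL_def F0_def[symmetric] c0_def[symmetric] by (subst integral_distr) auto
  have clim: "c \<longlonglongrightarrow> c0" using gt unfolding grass_tendsto_def c_def c0_def by blast
  show ?thesis
    unfolding ceq ceq0
  proof (rule subseq_principle)
    fix r :: "nat \<Rightarrow> nat" assume r: "strict_mono r"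
    define V where "V i = (\<chi> j. F (r i) (axis j 1))" for i
    have "norm (V i) \<le> real CARD('k)" for i
    proof -
      have "norm (V i) \<le> (\<Sum>j\<in>UNIV. norm (V i $ j))"
        unfolding norm_vec_def by (rule L2_set_le_sum) simp
      also have "\<dots> = real CARD('k)" using IF by (simp add: V_def)
      finally show ?thesis .
    qed
    then have "bounded (range V)" by (auto simp: bounded_iff)
    then obtain l r' where r': "strict_mono r'" and Vl: "(V \<circ> r') \<longlonglongrightarrow> l"
      using bounded_imp_convergent_subsequence by blast
    define s where "s i = r (r' i)" for i
    have s: "strict_mono s" using r r' by (simp add: s_def strict_mono_def)
    define F' where "F' y = (\<Sum>j\<in>UNIV. y $ j *\<^sub>R l $ j)" for y :: "real^'k"
    have Fexp: "F (s i) y = (\<Sum>j\<in>UNIV. y $ j *\<^sub>R V (r' i) $ j)" for i y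
      using lin_expand[of "F (s i)" y] IF by (simp add: V_def s_def)
    have Flim: "(\<lambda>i. F (s i) y) \<longlonglongrightarrow> F' y" for y
    proof -
      have vj: "(\<lambda>i. V (r' i) $ j) \<longlonglongrightarrow> l $ j" for j
        using Vl by (intro tendsto_vec_nth) (simp add: o_def)
      have "(\<lambda>i. (\<Sum>j\<in>UNIV. y $ j *\<^sub>R V (r' i) $ j)) \<longlonglongrightarrow> F' y"
        unfolding F'_def by (intro tendsto_sum tendsto_scaleR tendsto_const vj)
      then show ?thesis by (simp add: Fexp)
    qed
    have linF': "linear F'"
      by (rule linearI) (simp_all add: F'_def scaleR_add_left sum.distrib scaleR_sum_right)
    have nF': "norm (F' y) = norm y" for y
    proof -
      have "(\<lambda>i. norm (F (s i) y)) \<longlonglongrightarrow> norm (F' y)" by (intro tendsto_intros Flim)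
      moreover have "(\<lambda>i. norm (F (s i) y)) \<longlonglongrightarrow> norm y" using IF by simp
      ultimately show ?thesis by (rule LIMSEQ_unique)
    qed
    have F'L: "F' y \<in> L" for y
    proof -
      let ?P = "\<lambda>i. closest_point (Ls (s i))"
      have selfP: "?P i (F (s i) y) = F (s i) y" for i
        using IF by (intro closest_point_self) blast
      have cvx: "convex (Ls i)" "closed (Ls i)" "Ls i \<noteq> {}" for i
        using Lsub[of i] by (auto simp: subspace_imp_convex closed_subspace dest: subspace_0)
      have P1: "(\<lambda>i. ?P i (F' y)) \<longlonglongrightarrow> closest_point L (F' y)"
      proof -
        have "(\<lambda>i. closest_point (Ls i) (F' y)) \<longlonglongrightarrow> closest_point L (F' y)"
          using gt unfolding grass_tendsto_def by blast
        from LIMSEQ_subseq_LIMSEQ[OF this s] show ?thesis by (simp add: o_def)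
      qed
      have "(\<lambda>i. F (s i) y - ?P i (F' y)) \<longlonglongrightarrow> 0"
      proof (rule Lim_null_comparison)
        show "\<forall>\<^sub>F i in sequentially. norm (F (s i) y - ?P i (F' y)) \<le> dist (F (s i) y) (F' y)"
        proof (intro always_eventually allI)
          fix i
          have "dist (?P i (F (s i) y)) (?P i (F' y)) \<le> dist (F (s i) y) (F' y)"
            by (rule closest_point_lipschitz[OF cvx])
          then show "norm (F (s i) y - ?P i (F' y)) \<le> dist (F (s i) y) (F' y)"
            by (simp add: selfP dist_norm)
        qed
        show "(\<lambda>i. dist (F (s i) y) (F' y)) \<longlonglongrightarrow> 0"
          using tendsto_dist[OF Flim[of y] tendsto_const[of "F' y"]] by simp
      qed
      then have "(\<lambda>i. (F (s i) y - ?P i (F' y)) + ?P i (F' y)) \<longlonglongrightarrow> 0 + closest_point L (F' y)"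
        by (intro tendsto_add P1)
      then have "(\<lambda>i. F (s i) y) \<longlonglongrightarrow> closest_point L (F' y)" by simp
      with Flim[of y] have "F' y = closest_point L (F' y)" by (rule LIMSEQ_unique)
      moreover have "closest_point L (F' y) \<in> L" by (rule subspace_closest_point_in[OF Lsub0])
      ultimately show ?thesis by simp
    qed
    have injF0: "inj F0"
    proof -
      have "\<forall>x. F0 x = 0 \<longrightarrow> x = 0" using IF0 by (metis norm_eq_zero)
      then show ?thesis using IF0 linear_injective_0 by blast
    qed
    obtain h where h: "linear h" "h \<circ> F0 = id"
      using linear_injective_left_inverse[of F0] IF0 injF0 by blast
    define U where "U = h \<circ> F'"
    have FU: "F0 (U y) = F' y" for y
    proof -
      obtain z where "F' y = F0 z" using F'L[of y] IF0 by blast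
      moreover have "h (F0 z) = z" using fun_cong[OF h(2), of z] by simp
      ultimately show ?thesis by (simp add: U_def)
    qed
    have linU: "linear U" unfolding U_def using h linF' by (simp add: linear_compose)
    have nU: "norm (U y) = norm y" for y
    proof -
      have "norm (U y) = norm (F0 (U y))" using IF0 by simp
      then show ?thesis by (simp add: FU nF')
    qed
    have Um[measurable]: "U \<in> borel_measurable borel" by (rule linear_borel_measurable[OF linU])
    have F'm[measurable]: "F' \<in> borel_measurable borel" by (rule linear_borel_measurable[OF linF'])
    have "(\<lambda>i. \<integral>y. g (c (s i) + F (s i) y) \<partial>gam) \<longlonglongrightarrow> (\<integral>y. g (c0 + F' y) \<partial>gam)"
    proof (rule integral_dominated_convergence[where w="\<lambda>_. B"])
      show "(\<lambda>y. g (c0 + F' y)) \<in> borel_measurable gam" by measurable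
      show "(\<lambda>y. g (c (s i) + F (s i) y)) \<in> borel_measurable gam" for i by measurable
      show "integrable (gam :: (real^'k) measure) (\<lambda>_. B)" by (rule gp.integrable_const)
      show "AE y in gam. (\<lambda>i. g (c (s i) + F (s i) y)) \<longlonglongrightarrow> g (c0 + F' y)"
      proof (rule AE_I2)
        fix y
        have "(\<lambda>i. c (s i)) \<longlonglongrightarrow> c0" using LIMSEQ_subseq_LIMSEQ[OF clim s] by (simp add: o_def)
        then have "(\<lambda>i. c (s i) + F (s i) y) \<longlonglongrightarrow> c0 + F' y" by (intro tendsto_add Flim)
        then show "(\<lambda>i. g (c (s i) + F (s i) y)) \<longlonglongrightarrow> g (c0 + F' y)"
          by (rule isCont_tendsto_compose[OF gcont])
      qed
      show "AE y in gam. norm (g (c (s i) + F (s i) y)) \<le> B" for i using B by simp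
    qed
    moreover have "(\<integral>y. g (c0 + F' y) \<partial>gam) = (\<integral>y. g (c0 + F0 y) \<partial>gam)"
    proof -
      have "(\<integral>y. g (c0 + F' y) \<partial>gam) = (\<integral>y. g (c0 + F0 (U y)) \<partial>gam)" by (simp add: FU)
      also have "\<dots> = (\<integral>z. g (c0 + F0 z) \<partial>distr gam borel U)"
        by (subst integral_distr) auto
      also have "\<dots> = (\<integral>z. g (c0 + F0 z) \<partial>gam)"
        by (simp add: distr_gam_orth[OF linU nU])
      finally show ?thesis .
    qed
    ultimately show "\<exists>r' :: nat \<Rightarrow> nat. strict_mono r' \<and> (\<lambda>i. \<integral>y. g (c (r (r' i)) + F (r (r' i)) y) \<partial>gam) \<longlonglongrightarrow> (\<integral>y. g (c0 + F0 y) \<partial>gam)"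
      using r' unfolding s_def by auto
  qed
qed



lemma massL_measure:
  fixes K :: "'k::finite itself" and L :: "(real^'n::finite) set"
  assumes kL: "k_subspace K L" and H: "H \<in> sets borel"
  shows "measure (massL K q L) H = measure (gam :: (real^'k) measure) ((\<lambda>y. closest_point L q + iso K L y) -` H)"
proof -
  have "iso K L \<in> borel_measurable borel" using iso_props[OF kL] linear_borel_measurable by blast
  then have "(\<lambda>y. closest_point L q + iso K L y) \<in> borel_measurable borel" by measurable
  then show ?thesis unfolding massL_def using H by (subst measure_distr) auto
qed

lemma massL_ball:
  fixes K :: "'k::finite itself" and L :: "(real^'n::finite) set"
  assumes kL: "k_subspace K L" and c: "c \<in> L"
  shows "\<exists>w. norm w = norm (c - closest_point L q) \<and>
      measure (massL K q L) (cball c r \<inter> L) = measure (gam :: (real^'k) measure) (cball w r)"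
proof -
  have L: "subspace L" using kL by (simp add: k_subspace_def)
  note I = iso_props[OF kL]
  let ?F = "iso K L" and ?P = "closest_point L q"
  have "c - ?P \<in> L" using L c subspace_closest_point_in[OF L] by (simp add: subspace_diff)
  then obtain w where w: "?F w = c - ?P" using I by (metis rangeE)
  have inL: "?P + ?F y \<in> L" for y
  proof -
    have "?F y \<in> L" using I by blast
    then show ?thesis using subspace_closest_point_in[OF L] L by (simp add: subspace_add)
  qed
  have pre: "(\<lambda>y. ?P + ?F y) -` (cball c r \<inter> L) = cball w r"
  proof (intro set_eqI)
    fix y
    have "c - (?P + ?F y) = ?F (w - y)" using I w by (simp add: linear_diff)
    then have "dist c (?P + ?F y) = dist w y" using I by (simp add: dist_norm)
    then show "y \<in> (\<lambda>y. ?P + ?F y) -` (cball c r \<inter> L) \<longleftrightarrow> y \<in> cball w r"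
      using inL[of y] by simp
  qed
  have "closed (cball c r \<inter> L)" using L by (simp add: closed_Int closed_subspace)
  then have "measure (massL K q L) (cball c r \<inter> L) = measure gam ((\<lambda>y. ?P + ?F y) -` (cball c r \<inter> L))"
    by (intro massL_measure[OF kL]) simp
  also have "\<dots> = measure gam (cball w r)" by (simp only: pre)
  finally have "measure (massL K q L) (cball c r \<inter> L) = measure gam (cball w r)" .
  moreover have "norm w = norm (c - ?P)" using I w by metis
  ultimately show ?thesis by blast
qed

lemma massL_half:
  fixes K :: "'k::finite itself" and L :: "(real^'n::finite) set"
  assumes kL: "k_subspace K L" and a: "a \<in> L" "a \<noteq> 0"
  shows "\<exists>u. u \<noteq> 0 \<and>
      measure (massL K q L) {x \<in> L. a \<bullet> x \<le> b} = measure (gam :: (real^'k) measure) {y. u \<bullet> y \<le> b - a \<bullet> q}"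
proof -
  have L: "subspace L" using kL by (simp add: k_subspace_def)
  note I = iso_props[OF kL]
  let ?F = "iso K L" and ?P = "closest_point L q"
  define u where "u = adjoint ?F a"
  have adj: "u \<bullet> y = a \<bullet> ?F y" for y
    using adjoint_works[of ?F y a] I by (simp add: u_def inner_commute)
  obtain z where z: "a = ?F z" using I a by blast
  have "u \<bullet> z = a \<bullet> a" using adj z by simp
  then have u0: "u \<noteq> 0" using a by auto
  have inL: "?P + ?F y \<in> L" for y
  proof -
    have "?F y \<in> L" using I by blast
    then show ?thesis using subspace_closest_point_in[OF L] L by (simp add: subspace_add)
  qed
  have aP: "a \<bullet> ?P = a \<bullet> q" by (rule subspace_closest_point_inner[OF L a(1)])
  have pre: "(\<lambda>y. ?P + ?F y) -` {x \<in> L. a \<bullet> x \<le> b} = {y. u \<bullet> y \<le> b - a \<bullet> q}"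
    using inL by (auto simp: inner_add_right aP adj)
  have "{x \<in> L. a \<bullet> x \<le> b} = L \<inter> {x. a \<bullet> x \<le> b}" by auto
  then have "closed {x \<in> L. a \<bullet> x \<le> b}" using L by (simp add: closed_Int closed_subspace closed_halfspace_le)
  then have "measure (massL K q L) {x \<in> L. a \<bullet> x \<le> b} = measure gam ((\<lambda>y. ?P + ?F y) -` {x \<in> L. a \<bullet> x \<le> b})"
    by (intro massL_measure[OF kL]) simp
  also have "\<dots> = measure gam {y. u \<bullet> y \<le> b - a \<bullet> q}" by (simp only: pre)
  finally have "measure (massL K q L) {x \<in> L. a \<bullet> x \<le> b} = measure gam {y. u \<bullet> y \<le> b - a \<bullet> q}" .
  with u0 show ?thesis by blast
qed



lemma no_bisect:
  fixes K :: "'k::finite itself" and L :: "(real^'n::finite) set" and p :: "nat \<Rightarrow> real^'n"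
  assumes kL: "k_subspace K L" and p0: "p 0 = 0"
    and pax: "\<And>j. \<exists>i \<le> CARD('n) + 1. p i = axis j 1"
    and pv: "p (CARD('n) + 1) = - (\<Sum>j\<in>UNIV. axis j 1)"
    and eq: "\<And>i. i \<le> CARD('n) + 1 \<Longrightarrow> measure (massL K (p i) L) H = 1/2"
    and H: "closed_ball_of L H \<or> closed_halfspace_of L H"
  shows False
proof -
  have L: "subspace L" and dL: "dim L = CARD('k)" using kL by (auto simp: k_subspace_def)
  have "\<not> L \<subseteq> {0}" using dL dim_eq_0[of L] by auto
  then obtain a0 where a0: "a0 \<in> L" "a0 \<noteq> 0" by blast
  let ?P = "closest_point L"
  have P0: "?P 0 = 0" by (rule subspace_closest_point_0[OF L])
  let ?d = "CARD('n) + 1"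
  from H show False
  proof
    assume "closed_ball_of L H"
    then obtain c r where c: "c \<in> L" and r: "r > 0" and Hc: "H = cball c r \<inter> L"
      by (auto simp: closed_ball_of_def)
    have nrm: "norm (c - ?P (p i)) = norm c" if i: "i \<le> ?d" for i
    proof -
      obtain w where w: "norm w = norm (c - ?P (p i))"
          "measure (massL K (p i) L) (cball c r \<inter> L) = measure (gam :: (real^'k) measure) (cball w r)"
        using massL_ball[OF kL c, of "p i" r] by blast
      obtain w0 where w0: "norm w0 = norm (c - ?P (p 0))"
          "measure (massL K (p 0) L) (cball c r \<inter> L) = measure (gam :: (real^'k) measure) (cball w0 r)"
        using massL_ball[OF kL c, of "p 0" r] by blast
      have m1: "measure (gam :: (real^'k) measure) (cball w r) = 1/2" using eq[OF i] w(2) Hc by simp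
      have m0: "measure (gam :: (real^'k) measure) (cball w0 r) = 1/2" using eq[of 0] w0(2) Hc by simp
      have "norm w = norm w0"
      proof (rule ccontr)
        assume "norm w \<noteq> norm w0"
        then consider "norm w < norm w0" | "norm w0 < norm w" by linarith
        then show False
        proof cases
          case 1 from ball_mono[OF r 1] m1 m0 show False by simp
        next
          case 2 from ball_mono[OF r 2] m1 m0 show False by simp
        qed
      qed
      then show ?thesis using w(1) w0(1) p0 P0 by simp
    qed
    have sq: "?P (p i) \<bullet> ?P (p i) = 2 * (c \<bullet> p i)" if i: "i \<le> ?d" for i
    proof -
      have cP: "c \<bullet> ?P (p i) = c \<bullet> p i" by (rule subspace_closest_point_inner[OF L c])
      have "(c - ?P (p i)) \<bullet> (c - ?P (p i)) = c \<bullet> c"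
        using nrm[OF i] by (simp add: norm_eq_sqrt_inner)
      then show ?thesis by (simp add: inner_diff_left inner_diff_right inner_commute cP algebra_simps)
    qed
    have ej: "?P (axis j 1) \<bullet> ?P (axis j 1) = 2 * c $ j" for j
    proof -
      obtain i where "i \<le> ?d" "p i = axis j 1" using pax by blast
      then show ?thesis using sq[of i] by (simp add: inner_axis)
    qed
    have "?P (p ?d) \<bullet> ?P (p ?d) = 2 * (c \<bullet> p ?d)" by (rule sq) simp
    also have "c \<bullet> p ?d = - (\<Sum>j\<in>UNIV. c $ j)"
      unfolding pv by (simp add: inner_sum_right inner_axis)
    finally have v: "?P (p ?d) \<bullet> ?P (p ?d) = - 2 * (\<Sum>j\<in>UNIV. c $ j)" by simp
    have "(\<Sum>j\<in>UNIV. ?P (axis j 1) \<bullet> ?P (axis j 1)) = 2 * (\<Sum>j\<in>UNIV. c $ j)"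
      by (simp add: ej sum_distrib_left)
    also have "\<dots> = - (?P (p ?d) \<bullet> ?P (p ?d))" using v by simp
    also have "\<dots> \<le> 0" by simp
    finally have "(\<Sum>j\<in>UNIV. ?P (axis j 1) \<bullet> ?P (axis j 1)) \<le> 0" .
    moreover have "0 \<le> (\<Sum>j\<in>UNIV. ?P (axis j (1::real)) \<bullet> ?P (axis j 1))"
      by (intro sum_nonneg) simp
    ultimately have "(\<Sum>j\<in>UNIV. ?P (axis j (1::real)) \<bullet> ?P (axis j 1)) = 0"
      by linarith
    then have "\<forall>j\<in>UNIV. ?P (axis j (1::real)) \<bullet> ?P (axis j 1) = 0"
      by (subst (asm) sum_nonneg_eq_0_iff) auto
    then have Pe: "?P (axis j (1::real)) = 0" for j by simp
    have "a0 $ j = 0" for j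
    proof -
      have "a0 $ j = a0 \<bullet> axis j 1" by (simp add: inner_axis)
      also have "\<dots> = a0 \<bullet> ?P (axis j 1)" by (rule subspace_closest_point_inner[OF L a0(1), symmetric])
      also have "\<dots> = 0" by (simp add: Pe)
      finally show ?thesis .
    qed
    then have "a0 = 0" by (simp add: vec_eq_iff)
    with a0 show False by simp
  next
    assume "closed_halfspace_of L H"
    then obtain a b where a: "a \<in> L" "a \<noteq> 0" and Ha: "H = {x \<in> L. a \<bullet> x \<le> b}"
      by (auto simp: closed_halfspace_of_def)
    have z: "b - a \<bullet> p i = 0" if i: "i \<le> ?d" for i
    proof -
      obtain u where u: "u \<noteq> 0" "measure (massL K (p i) L) {x \<in> L. a \<bullet> x \<le> b} = measure (gam :: (real^'k) measure) {y. u \<bullet> y \<le> b - a \<bullet> p i}"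
        using massL_half[OF kL a, of "p i" b] by blast
      have "measure (gam :: (real^'k) measure) {y. u \<bullet> y \<le> b - a \<bullet> p i} = 1/2" using eq[OF i] u(2) Ha by simp
      then show ?thesis by (rule half_space[OF u(1)])
    qed
    have b0: "b = 0" using z[of 0] p0 by simp
    have "a $ j = 0" for j
    proof -
      obtain i where "i \<le> ?d" "p i = axis j 1" using pax by blast
      then show ?thesis using z[of i] b0 by (simp add: inner_axis)
    qed
    then have "a = 0" by (simp add: vec_eq_iff)
    with a show False by simp
  qed
qed

theorem claim3p1:
  assumes "CARD('k::finite) \<le> CARD('n::finite)"
  shows "\<exists>\<mu> :: nat \<Rightarrow> (real^'n) set \<Rightarrow> (real^'n) measure.
           (\<forall>i \<le> CARD('n) + 1. mass_assignment TYPE('k) (\<mu> i)) \<and>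
           (\<forall>L. k_subspace TYPE('k) L \<longrightarrow>
              \<not> (\<exists>H. (closed_ball_of L H \<or> closed_halfspace_of L H) \<and>
                     (\<forall>i \<le> CARD('n) + 1. measure (\<mu> i L) H = 1 / 2)))"
proof -
  obtain e :: "nat \<Rightarrow> 'n" where e: "bij_betw e {1..CARD('n)} UNIV"
    using ex_bij_betw_nat_finite_1[of "UNIV :: 'n set"] by auto
  define p :: "nat \<Rightarrow> real^'n" where
    "p i = (if i = 0 then 0 else if i \<le> CARD('n) then axis (e i) 1 else - (\<Sum>j\<in>UNIV. axis j 1))" for i
  define \<mu> where "\<mu> i = massL TYPE('k) (p i)" for i
  have p0: "p 0 = 0" by (simp add: p_def)
  have pv: "p (CARD('n) + 1) = - (\<Sum>j\<in>UNIV. axis j 1)" by (simp add: p_def)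
  have pax: "\<exists>i \<le> CARD('n) + 1. p i = axis j 1" for j
  proof -
    obtain i where "i \<in> {1..CARD('n)}" "e i = j" using e by (metis bij_betw_iff_bijections UNIV_I)
    then show ?thesis by (intro exI[of _ i]) (auto simp: p_def)
  qed
  have MA: "mass_assignment TYPE('k) (\<mu> i)" for i
    unfolding mass_assignment_def \<mu>_def
    using mass_distribution_massL massL_cont by blast
  show ?thesis
  proof (intro exI[of _ \<mu>] conjI allI impI)
    show "mass_assignment TYPE('k) (\<mu> i)" for i by (rule MA)
    fix L :: "(real^'n) set" assume kL: "k_subspace TYPE('k) L"
    show "\<not> (\<exists>H. (closed_ball_of L H \<or> closed_halfspace_of L H) \<and>
                     (\<forall>i \<le> CARD('n) + 1. measure (\<mu> i L) H = 1 / 2))"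
    proof
      assume "\<exists>H. (closed_ball_of L H \<or> closed_halfspace_of L H) \<and> (\<forall>i \<le> CARD('n) + 1. measure (\<mu> i L) H = 1 / 2)"
      then obtain H where H: "closed_ball_of L H \<or> closed_halfspace_of L H"
        and eq: "\<And>i. i \<le> CARD('n) + 1 \<Longrightarrow> measure (massL TYPE('k) (p i) L) H = 1/2"
        by (auto simp: \<mu>_def)
      show False by (rule no_bisect[OF kL p0 pax pv eq H])
    qed
  qed
qed

end
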